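(* Let $K$ be a field of characteristic $0$, let $E$ be the infinite-dimensional unitary Grassmann algebra over $K$ with even part $E_0$, let $A=\begin{pmatrix} E_0 & E\\ 0 & E\end{pmatrix}$, and let $F_n(A)=K\langle x_1,\dots,x_n\rangle/(K\langle x_1,\dots,x_n\rangle\cap T(A))$. If $n\geq 2$ and $m\geq 2$, then the polynomial \[f_m^{(1)}=[x_2,x_1,\dots,x_1]\] (a left-normed commutator of length $m$ with $x_2$ followed by $m-1$ copies of $x_1$) is not a polynomial identity of $F_n(A)$.
   Context: All algebras are associative and unitary over $K$; $T(A)$ is the ideal of polynomial identities of $A$. $E$ is generated by anticommuting $e_1,e_2,\dots$ and $E_0$ is the span of basis products of even length. Commutators: $[a,b]=ab-ba$, $[a_1,\dots,a_k]=[[a_1,\dots,a_{k-1}],a_k]$. *)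

theory Defs
  imports Main
begin

text \<open>An element of E is a K-linear combination of basis monomials e_S = e_{i1} ... e_{ik}
  (i1 < ... < ik, S = {i1,...,ik} finite); it is represented by its coefficient function.\<close>

type_synonym 'k grass = "nat set \<Rightarrow> 'k"

definition grass_carrier :: "'k::field grass set" where
  "grass_carrier = {a. finite {S. a S \<noteq> 0} \<and> (\<forall>S. a S \<noteq> 0 \<longrightarrow> finite S)}"

definition grass_even :: "'k::field grass set" where
  "grass_even = {a \<in> grass_carrier. \<forall>S. a S \<noteq> 0 \<longrightarrow> even (card S)}"

text \<open>Number of inversions when concatenating e_T and e_U: e_T e_U = (-1)^inv e_(T \<union> U).\<close>
definition grass_inv :: "nat set \<Rightarrow> nat set \<Rightarrow> nat" where
  "grass_inv T U = card {(i, j). i \<in> T \<and> j \<in> U \<and> j < i}"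

definition grass_zero :: "'k::field grass" where
  "grass_zero = (\<lambda>S. 0)"

definition grass_one :: "'k::field grass" where
  "grass_one = (\<lambda>S. if S = {} then 1 else 0)"

definition grass_add :: "'k::field grass \<Rightarrow> 'k grass \<Rightarrow> 'k grass" where
  "grass_add a b = (\<lambda>S. a S + b S)"

definition grass_smult :: "'k::field \<Rightarrow> 'k grass \<Rightarrow> 'k grass" where
  "grass_smult c a = (\<lambda>S. c * a S)"

definition grass_mult :: "'k::field grass \<Rightarrow> 'k grass \<Rightarrow> 'k grass" where
  "grass_mult a b = (\<lambda>S. if finite S then
       (\<Sum>T\<in>Pow S. (-1) ^ grass_inv T (S - T) * a T * b (S - T)) else 0)"

text \<open>(a, b, c) represents the upper triangular matrix [[a, b], [0, c]].\<close>
type_synonym 'k tri = "'k grass \<times> 'k grass \<times> 'k grass"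

definition tri_carrier :: "'k::field tri set" where
  "tri_carrier = {(a, b, c). a \<in> grass_even \<and> b \<in> grass_carrier \<and> c \<in> grass_carrier}"

definition tri_zero :: "'k::field tri" where
  "tri_zero = (grass_zero, grass_zero, grass_zero)"

definition tri_one :: "'k::field tri" where
  "tri_one = (grass_one, grass_zero, grass_one)"

fun tri_add :: "'k::field tri \<Rightarrow> 'k tri \<Rightarrow> 'k tri" where
  "tri_add (a, b, c) (a', b', c') = (grass_add a a', grass_add b b', grass_add c c')"

fun tri_smult :: "'k::field \<Rightarrow> 'k tri \<Rightarrow> 'k tri" where
  "tri_smult k (a, b, c) = (grass_smult k a, grass_smult k b, grass_smult k c)"

fun tri_mult :: "'k::field tri \<Rightarrow> 'k tri \<Rightarrow> 'k tri" where
  "tri_mult (a, b, c) (a', b', c') =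
     (grass_mult a a', grass_add (grass_mult a b') (grass_mult b c'), grass_mult c c')"

definition tri_word :: "(nat \<Rightarrow> 'k::field tri) \<Rightarrow> nat list \<Rightarrow> 'k tri" where
  "tri_word \<phi> w = foldr (\<lambda>i acc. tri_mult (\<phi> i) acc) w tri_one"

text \<open>A noncommutative polynomial is a finitely supported coefficient function on words
  (lists of variable indices).\<close>
type_synonym 'k ncpoly = "nat list \<Rightarrow> 'k"

definition ncpoly_all :: "'k::field ncpoly set" where
  "ncpoly_all = {p. finite {w. p w \<noteq> 0}}"

definition ncpoly_carrier :: "nat \<Rightarrow> 'k::field ncpoly set" where
  "ncpoly_carrier n = {p \<in> ncpoly_all. \<forall>w. p w \<noteq> 0 \<longrightarrow> set w \<subseteq> {1..n}}"

definition pvar :: "nat \<Rightarrow> 'k::field ncpoly" where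
  "pvar i = (\<lambda>w. if w = [i] then 1 else 0)"

definition pone :: "'k::field ncpoly" where
  "pone = (\<lambda>w. if w = [] then 1 else 0)"

definition pminus :: "'k::field ncpoly \<Rightarrow> 'k ncpoly \<Rightarrow> 'k ncpoly" where
  "pminus p q = (\<lambda>w. p w - q w)"

definition pmult :: "'k::field ncpoly \<Rightarrow> 'k ncpoly \<Rightarrow> 'k ncpoly" where
  "pmult p q = (\<lambda>w. \<Sum>i\<in>{0..length w}. p (take i w) * q (drop i w))"

definition pcomm :: "'k::field ncpoly \<Rightarrow> 'k ncpoly \<Rightarrow> 'k ncpoly" where
  "pcomm p q = pminus (pmult p q) (pmult q p)"

fun plcomm :: "'k::field ncpoly \<Rightarrow> 'k ncpoly \<Rightarrow> nat \<Rightarrow> 'k ncpoly" where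
  "plcomm y x 0 = y"
| "plcomm y x (Suc k) = pcomm (plcomm y x k) x"

definition f1 :: "nat \<Rightarrow> 'k::field ncpoly" where
  "f1 m = plcomm (pvar 2) (pvar 1) (m - 1)"

definition pword :: "(nat \<Rightarrow> 'k::field ncpoly) \<Rightarrow> nat list \<Rightarrow> 'k ncpoly" where
  "pword g w = foldr (\<lambda>i acc. pmult (g i) acc) w pone"

definition psubst :: "(nat \<Rightarrow> 'k::field ncpoly) \<Rightarrow> 'k ncpoly \<Rightarrow> 'k ncpoly" where
  "psubst g p = (\<lambda>u. \<Sum>w\<in>{w. p w \<noteq> 0}. p w * pword g w u)"

definition tri_eval :: "(nat \<Rightarrow> 'k::field tri) \<Rightarrow> 'k ncpoly \<Rightarrow> 'k tri" where
  "tri_eval \<phi> p =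
     (let W = {w. p w \<noteq> 0}; F = (\<lambda>w. tri_smult (p w) (tri_word \<phi> w)) in
      ((\<lambda>S. \<Sum>w\<in>W. fst (F w) S), (\<lambda>S. \<Sum>w\<in>W. fst (snd (F w)) S),
       (\<lambda>S. \<Sum>w\<in>W. snd (snd (F w)) S)))"

definition TA :: "'k::field ncpoly set" where
  "TA = {p \<in> ncpoly_all. \<forall>\<phi>. (\<forall>i. \<phi> i \<in> tri_carrier) \<longrightarrow> tri_eval \<phi> p = tri_zero}"

text \<open>An element of F_n(A) is the class of a
  polynomial in K<x_1..x_n>; evaluating f at classes [g i] gives the class of the substituted
  polynomial, which is zero iff that polynomial lies in T(A). Hence f is a polynomial identity
  of F_n(A) iff every substitution of polynomials of K<x_1..x_n> into f lands in T(A).\<close>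
definition is_PI_Fn :: "nat \<Rightarrow> 'k::field ncpoly \<Rightarrow> bool" where
  "is_PI_Fn n f \<longleftrightarrow> (\<forall>g. (\<forall>i. g i \<in> ncpoly_carrier n) \<longrightarrow> psubst g f \<in> TA)"

end

theory Submission
  imports Defs
begin

definition sc :: "'k::field \<Rightarrow> 'k grass" where
  "sc x = (\<lambda>S. if S = {} then x else 0)"

lemma grass_mult_sc: "grass_mult (sc x) (sc y) = sc (x * y)"
proof (rule ext)
  fix S :: "nat set"
  show "grass_mult (sc x) (sc y) S = sc (x * y) S"
  proof (cases "S = {}")
    case True
    then show ?thesis by (simp add: grass_mult_def sc_def grass_inv_def)
  next
    case False
    have "(\<Sum>T\<in>Pow S. (-1) ^ grass_inv T (S - T) * sc x T * sc y (S - T)) = 0"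
      by (rule sum.neutral) (use False in \<open>auto simp: sc_def\<close>)
    then show ?thesis using False by (simp add: grass_mult_def sc_def)
  qed
qed

lemma grass_add_sc: "grass_add (sc x) (sc y) = sc (x + y)"
  by (auto simp: grass_add_def sc_def)

fun Af :: "nat list \<Rightarrow> 'k::field" where
  "Af [] = 1"
| "Af (i # w) = (if i = 1 then Af w else 0)"

fun Bf :: "nat list \<Rightarrow> 'k::field" where
  "Bf [] = 0"
| "Bf (i # w) = (if i = 1 then Bf w else if i = 2 \<and> w = [] then 1 else 0)"

definition Cf :: "nat list \<Rightarrow> 'k::field" where
  "Cf w = (if w = [] then 1 else 0)"

definition phi :: "nat \<Rightarrow> 'k::field tri" where
  "phi i = (sc (if i = 1 then 1 else 0), sc (if i = 2 then 1 else 0), sc 0)"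

lemma tri_word_phi: "tri_word (phi :: nat \<Rightarrow> 'k::field tri) w = (sc (Af w), sc (Bf w), sc (Cf w))"
proof (induction w)
  case Nil
  then show ?case by (simp add: tri_word_def tri_one_def grass_one_def grass_zero_def sc_def Cf_def)
next
  case (Cons i w)
  have "tri_word (phi :: nat \<Rightarrow> 'k tri) (i # w) = tri_mult (phi i) (tri_word phi w)"
    by (simp add: tri_word_def)
  also have "\<dots> = (sc (Af (i # w)), sc (Bf (i # w)), sc (Cf (i # w)))"
    unfolding Cons.IH by (simp add: phi_def grass_mult_sc grass_add_sc Cf_def)
  finally show ?case .
qed

lemma phi_carrier: "phi i \<in> tri_carrier"
proof -
  have c: "sc x \<in> grass_carrier" for x :: 'a
  proof -
    have "{S. sc x S \<noteq> 0} \<subseteq> {{}}" by (auto simp: sc_def split: if_splits)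
    then have "finite {S. sc x S \<noteq> 0}" by (rule finite_subset) simp
    then show ?thesis by (auto simp: grass_carrier_def sc_def split: if_splits)
  qed
  have e: "sc x \<in> grass_even" for x :: 'a
    using c by (auto simp: grass_even_def sc_def split: if_splits)
  show ?thesis by (simp add: phi_def tri_carrier_def c e)
qed

definition supp :: "'k::field ncpoly \<Rightarrow> nat list set" where
  "supp p = {w. p w \<noteq> 0}"

definition beta :: "'k::field ncpoly \<Rightarrow> 'k" where
  "beta p = (\<Sum>w\<in>supp p. p w * Bf w)"

lemma beta_superset:
  assumes "finite F" "supp p \<subseteq> F"
  shows "beta p = (\<Sum>w\<in>F. p w * Bf w)"
  unfolding beta_def
  by (rule sum.mono_neutral_left) (use assms in \<open>auto simp: supp_def\<close>)

lemma term_left: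
  assumes "j \<le> length u"
  shows "pvar i (take j u) * (q::'k::field ncpoly) (drop j u) = (if j = 1 \<and> u \<noteq> [] \<and> hd u = i then q (tl u) else 0)"
proof (cases u)
  case Nil then show ?thesis using assms by (simp add: pvar_def)
next
  case (Cons a v)
  show ?thesis
  proof (cases j)
    case 0 then show ?thesis using Cons by (simp add: pvar_def)
  next
    case (Suc j')
    have "take j' v = [] \<longleftrightarrow> j' = 0" using assms Cons Suc by auto
    then show ?thesis using Cons Suc by (auto simp add: pvar_def)
  qed
qed

lemma term_right:
  assumes "j \<le> length u"
  shows "(q::'k::field ncpoly) (take j u) * pvar i (drop j u) = (if j = length u - 1 \<and> u \<noteq> [] \<and> last u = i then q (butlast u) else 0)"
proof (cases "u = []")
  case True then show ?thesis using assms by (simp add: pvar_def)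
next
  case False
  then obtain v a where u: "u = v @ [a]" by (metis append_butlast_last_id)
  show ?thesis
  proof (cases "j \<le> length v")
    case True
    then have d: "drop j u = drop j v @ [a]" using u by simp
    show ?thesis
    proof (cases "j = length v")
      case True then show ?thesis using u d by (simp add: pvar_def)
    next
      case False
      then have "drop j v \<noteq> []" using \<open>j \<le> length v\<close> by simp
      then show ?thesis using u d False by (simp add: pvar_def)
    qed
  next
    case False
    then have "j = length u" using assms u by simp
    then show ?thesis using u by (simp add: pvar_def)
  qed
qed

lemma pmult_pvar_left:
  "pmult (pvar i) q u = (if u \<noteq> [] \<and> hd u = i then q (tl u) else 0)"
proof -
  have "pmult (pvar i) q u = (\<Sum>j\<in>{0..length u}. (if j = 1 \<and> u \<noteq> [] \<and> hd u = i then q (tl u) else 0))"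
    unfolding pmult_def by (rule sum.cong) (simp_all add: term_left)
  also have "\<dots> = (if u \<noteq> [] \<and> hd u = i then q (tl u) else 0)"
  proof (cases "u \<noteq> [] \<and> hd u = i")
    case True
    then have "(1::nat) \<in> {0..length u}" by (cases u) auto
    then show ?thesis using True by (simp add: sum.delta)
  qed auto
  finally show ?thesis .
qed

lemma pmult_pvar_right:
  "pmult q (pvar i) u = (if u \<noteq> [] \<and> last u = i then q (butlast u) else 0)"
proof -
  have "pmult q (pvar i) u = (\<Sum>j\<in>{0..length u}. (if j = length u - 1 \<and> u \<noteq> [] \<and> last u = i then q (butlast u) else 0))"
    unfolding pmult_def by (rule sum.cong) (simp_all add: term_right)
  also have "\<dots> = (if u \<noteq> [] \<and> last u = i then q (butlast u) else 0)"
  proof (cases "u \<noteq> [] \<and> last u = i")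
    case True
    then have "length u - 1 \<in> {0..length u}" by auto
    then show ?thesis using True by (simp add: sum.delta)
  qed auto
  finally show ?thesis .
qed

lemma Bf_snoc1: "Bf (u @ [1]) = 0"
  by (induction u) auto

lemma beta_mult_right: "beta (pmult q (pvar 1)) = 0"
  unfolding beta_def
proof (rule sum.neutral, rule ballI)
  fix w assume "w \<in> supp (pmult q (pvar 1))"
  then have "w \<noteq> [] \<and> last w = 1" by (auto simp: supp_def pmult_pvar_right split: if_splits)
  then have "w = butlast w @ [1]" by (metis append_butlast_last_id)
  then have "(Bf w :: 'a) = 0" by (metis Bf_snoc1)
  then show "pmult q (pvar 1) w * Bf w = 0" by simp
qed

lemma supp_mult_left: "supp (pmult (pvar 1) q) = Cons 1 ` supp q"
proof (rule set_eqI)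
  fix w
  show "w \<in> supp (pmult (pvar 1) q) \<longleftrightarrow> w \<in> Cons 1 ` supp q"
  proof (cases w)
    case Nil then show ?thesis by (auto simp: supp_def pmult_pvar_left)
  next
    case (Cons a u) then show ?thesis by (auto simp: supp_def pmult_pvar_left)
  qed
qed

lemma beta_mult_left: "beta (pmult (pvar 1) q) = beta q"
proof -
  have "beta (pmult (pvar 1) q) = (\<Sum>w\<in>Cons 1 ` supp q. pmult (pvar 1) q w * Bf w)"
    unfolding beta_def supp_mult_left ..
  also have "\<dots> = (\<Sum>u\<in>supp q. pmult (pvar 1) q (1 # u) * Bf (1 # u))"
    by (rule sum.reindex_cong[where l="Cons 1"]) auto
  also have "\<dots> = beta q" by (simp add: beta_def pmult_pvar_left)
  finally show ?thesis .
qed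

lemma supp_mult_right: "supp (pmult q (pvar 1)) \<subseteq> (\<lambda>u. u @ [1]) ` supp q"
proof
  fix w assume "w \<in> supp (pmult q (pvar 1))"
  then have h: "w \<noteq> [] \<and> last w = 1 \<and> q (butlast w) \<noteq> 0"
    by (auto simp: supp_def pmult_pvar_right split: if_splits)
  then have "w = butlast w @ [1]" by (metis append_butlast_last_id)
  then show "w \<in> (\<lambda>u. u @ [1]) ` supp q" using h by (auto simp: supp_def)
qed

lemma beta_minus:
  assumes "finite (supp p)" "finite (supp q)"
  shows "beta (pminus p q) = beta p - beta q"
proof -
  let ?F = "supp p \<union> supp q"
  have "supp (pminus p q) \<subseteq> ?F" by (auto simp: supp_def pminus_def)
  then have "beta (pminus p q) = (\<Sum>w\<in>?F. pminus p q w * Bf w)"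
    using assms by (intro beta_superset) auto
  also have "\<dots> = (\<Sum>w\<in>?F. p w * Bf w) - (\<Sum>w\<in>?F. q w * Bf w)"
    by (simp add: pminus_def algebra_simps sum_subtractf)
  also have "\<dots> = beta p - beta q"
  proof -
    have "beta p = (\<Sum>w\<in>?F. p w * Bf w)" by (rule beta_superset) (use assms in auto)
    moreover have "beta q = (\<Sum>w\<in>?F. q w * Bf w)" by (rule beta_superset) (use assms in auto)
    ultimately show ?thesis by simp
  qed
  finally show ?thesis .
qed

lemma main_inv:
  "finite (supp (plcomm (pvar 2) (pvar 1) k :: 'k::field ncpoly))
   \<and> (\<forall>w. plcomm (pvar 2) (pvar 1) k w \<noteq> (0::'k) \<longrightarrow> set w \<subseteq> {1,2})
   \<and> beta (plcomm (pvar 2) (pvar 1) k :: 'k ncpoly) = (-1) ^ k"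
proof (induction k)
  case 0
  have "supp (pvar 2 :: 'k ncpoly) = {[2]}" by (auto simp: supp_def pvar_def)
  then show ?case by (auto simp: beta_def pvar_def)
next
  case (Suc k)
  let ?p = "plcomm (pvar 2) (pvar 1) k :: 'k ncpoly"
  have f: "finite (supp ?p)" using Suc by simp
  have f1: "finite (supp (pmult ?p (pvar 1)))"
    using finite_subset[OF supp_mult_right finite_imageI[OF f]] .
  have f2: "finite (supp (pmult (pvar 1) ?p))"
    unfolding supp_mult_left using f by simp
  have fs: "finite (supp (plcomm (pvar 2) (pvar 1) (Suc k) :: 'k ncpoly))"
  proof -
    have "supp (plcomm (pvar 2) (pvar 1) (Suc k) :: 'k ncpoly)
        \<subseteq> supp (pmult ?p (pvar 1)) \<union> supp (pmult (pvar 1) ?p)"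
      by (auto simp: supp_def pcomm_def pminus_def)
    then show ?thesis using f1 f2 by (meson finite_UnI finite_subset)
  qed
  have sets: "set w \<subseteq> {1,2}" if "plcomm (pvar 2) (pvar 1) (Suc k) w \<noteq> (0::'k)" for w
  proof -
    from that have "pmult ?p (pvar 1) w \<noteq> 0 \<or> pmult (pvar 1) ?p w \<noteq> 0"
      by (auto simp: pcomm_def pminus_def)
    then show ?thesis
    proof
      assume "pmult ?p (pvar 1) w \<noteq> 0"
      then have h: "w \<noteq> [] \<and> last w = 1 \<and> ?p (butlast w) \<noteq> 0"
        by (auto simp: pmult_pvar_right split: if_splits)
      then have "w = butlast w @ [1]" by (metis append_butlast_last_id)
      moreover have "set (butlast w) \<subseteq> {1,2}" using Suc h by blast
      ultimately show ?thesis by (metis Un_least empty_set insert_subset list.simps(15) set_append insertI1 empty_subsetI)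
    next
      assume "pmult (pvar 1) ?p w \<noteq> 0"
      then have h: "w \<noteq> [] \<and> hd w = 1 \<and> ?p (tl w) \<noteq> 0"
        by (auto simp: pmult_pvar_left split: if_splits)
      then have "w = 1 # tl w" by (metis list.collapse)
      moreover have "set (tl w) \<subseteq> {1,2}" using Suc h by blast
      ultimately show ?thesis by (metis insert_subset insertI1 list.simps(15))
    qed
  qed
  have "beta (plcomm (pvar 2) (pvar 1) (Suc k) :: 'k ncpoly)
      = beta (pmult ?p (pvar 1)) - beta (pmult (pvar 1) ?p)"
    using f1 f2 by (simp add: pcomm_def beta_minus)
  also have "\<dots> = (-1) ^ Suc k"
  proof -
    have a: "beta (pmult ?p (pvar 1)) = 0" by (rule beta_mult_right)
    have b: "beta (pmult (pvar 1) ?p) = beta ?p" by (rule beta_mult_left)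
    show ?thesis using a b Suc by simp
  qed
  finally show ?case using fs sets by blast
qed

definition gsub :: "nat \<Rightarrow> nat \<Rightarrow> 'k::field ncpoly" where
  "gsub n i = (if i \<in> {1..n} then pvar i else (\<lambda>w. 0))"

lemma gsub_carrier: "gsub n i \<in> ncpoly_carrier n"
proof (cases "i \<in> {1..n}")
  case True
  have "{w. pvar i w \<noteq> (0::'a)} \<subseteq> {[i]}" by (auto simp: pvar_def split: if_splits)
  then have "finite {w. pvar i w \<noteq> (0::'a)}" by (rule finite_subset) simp
  then show ?thesis using True
    by (auto simp: gsub_def ncpoly_carrier_def ncpoly_all_def pvar_def split: if_splits)
qed (auto simp: gsub_def ncpoly_carrier_def ncpoly_all_def)

lemma pword_gsub:
  "set w \<subseteq> {1..n} \<Longrightarrow> pword (gsub n :: nat \<Rightarrow> 'k::field ncpoly) w = (\<lambda>u. if u = w then 1 else 0)"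
proof (induction w)
  case Nil
  then show ?case by (simp add: pword_def pone_def)
next
  case (Cons i w)
  then have iw: "i \<in> {1..n}" "set w \<subseteq> {1..n}" by auto
  have "pword (gsub n :: nat \<Rightarrow> 'k ncpoly) (i # w) = pmult (pvar i) (pword (gsub n) w)"
    using iw by (simp add: pword_def gsub_def)
  also have "\<dots> = (\<lambda>u. if u = i # w then 1 else 0)"
  proof (rule ext)
    fix u show "pmult (pvar i) (pword (gsub n) w) u = (if u = i # w then 1 else (0::'k))"
      using Cons.IH[OF iw(2)] by (cases u) (auto simp: pmult_pvar_left)
  qed
  finally show ?case .
qed

lemma psubst_gsub:
  assumes "finite (supp p)" "\<forall>w. p w \<noteq> 0 \<longrightarrow> set w \<subseteq> {1..n}"
  shows "psubst (gsub n) p = p"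
proof (rule ext)
  fix u
  have "psubst (gsub n) p u = (\<Sum>w\<in>supp p. p w * (if u = w then 1 else 0))"
    unfolding psubst_def supp_def[symmetric]
    by (rule sum.cong) (use assms in \<open>auto simp: pword_gsub supp_def\<close>)
  also have "\<dots> = (\<Sum>w\<in>supp p. if w = u then p w else 0)"
    by (rule sum.cong) auto
  also have "\<dots> = p u" using assms(1) by (simp add: sum.delta supp_def)
  finally show "psubst (gsub n) p u = p u" .
qed

lemma tri_eval_b:
  "fst (snd (tri_eval phi p)) {} = beta p"
  by (simp add: tri_eval_def Let_def beta_def supp_def tri_word_phi grass_smult_def sc_def)

theorem lemma3p5:
  fixes n m :: nat
  assumes "n \<ge> 2" and "m \<ge> 2"
  shows "\<not> is_PI_Fn n (f1 m :: 'k::field_char_0 ncpoly)"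
proof
  assume PI: "is_PI_Fn n (f1 m :: 'k ncpoly)"
  have inv: "finite (supp (f1 m :: 'k ncpoly))"
    "\<forall>w. (f1 m :: 'k ncpoly) w \<noteq> 0 \<longrightarrow> set w \<subseteq> {1,2}"
    "beta (f1 m :: 'k ncpoly) = (-1) ^ (m - 1)"
    using main_inv[where k="m - 1"] by (auto simp: f1_def)
  have "\<forall>w. (f1 m :: 'k ncpoly) w \<noteq> 0 \<longrightarrow> set w \<subseteq> {1..n}"
    using inv(2) assms(1) by fastforce
  then have eq: "psubst (gsub n) (f1 m :: 'k ncpoly) = f1 m"
    by (rule psubst_gsub[OF inv(1)])
  have "psubst (gsub n) (f1 m :: 'k ncpoly) \<in> TA"
    using PI gsub_carrier unfolding is_PI_Fn_def by blast
  then have "tri_eval phi (f1 m :: 'k ncpoly) = tri_zero"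
    using phi_carrier eq by (auto simp: TA_def)
  then have "fst (snd (tri_eval phi (f1 m :: 'k ncpoly))) {} = 0"
    by (simp add: tri_zero_def grass_zero_def)
  then have "beta (f1 m :: 'k ncpoly) = 0" using tri_eval_b by metis
  then show False using inv(3) by simp
qed

end
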